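(* Let $\lambda:\frac12\mathbb{N}\to\mathbb{C}$ and let $\sigma\in\Phi^0(SU_q(2))$ satisfy $\sum_{j=-l}^{l}\sigma_{i_0j}(l)=\lambda(l)$ for every $l\in\frac12\mathbb{N}$ and every $-l\le i_0\le l$. Then $\{\lambda(l)\}_{l\in\frac12\mathbb{N}}\subseteq\mathrm{spec}(T_\sigma)$, and the multiplicity of $\lambda(l)$ as an eigenvalue is at least $2l+1$.
   Context: Fix $0<q<1$. $SU_q(2)$ is the $*$-algebra generated by $a,c$ with $ac^*=qc^*a$, $ca^*=qa^*c$, $c^*a^*=qa^*c^*$, $c^*c=cc^*$, $aa^*+q^2c^*c=a^*a+c^*c=1$, with Haar state $h$. For $l\in\frac12\mathbb{N}$, $T^l=[t^l_{ij}]_{-l\le i,j\le l}$ is the irreducible unitary matrix corepresentation of dimension $2l+1$; $\{t^l_{ij}\}$ is an orthogonal basis with $h(t^l_{ij}(t^l_{ij})^* )=[2l+1]_q^{-1}q^{2j}$, $[x]_q=\frac{q^x-q^{-x}}{q-q^{-1}}$. Fourier transform: $\hat f(l)_{mn}=h(f(t^l_{nm})^* )$. $Tr_q(M)=Tr(D_qM)$, $D_q=\mathrm{diag}(q^{-2i})_{-l\le i\le l}$. A symbol is a map $\sigma:\frac12\mathbb{N}\to\bigcup_lM_{2l+1}(\mathbb{C})\otimes SU_q(2)$ (matrix entries $\sigma_{ij}(l)$, $-l\le i,j\le l$), with operator $T_\sigma f=\sum_l[2l+1]_qTr_q(\sigma(l)\hat f(l)T^l)$. With $I_{2l+1}=\{-l,\dots,l\}$: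 $\sigma$ is homogeneous of Fourier order $m\in\frac12\mathbb{N}$ if for each $l$ there is $\psi_\sigma(l):I_{2l+1}^2\to I_{2l+1}^2$ with $\sigma(l)_{ij}\in\mathrm{Span}\{t^m_{\psi_\sigma(l)(i,j)}\}$ and $\sigma(l)_{ij}=0$ when $\psi_\sigma(l)(i,j)\notin I_{2m+1}^2$; $\Phi^m(SU_q(2))$ consists of finite linear combinations of such symbols; in particular symbols in $\Phi^0$ have complex entries. *)

theory Defs
  imports Complex_Main
begin

(* Conventions.
   l \<in> 1/2 N is represented by N = 2l :: nat.
   Matrix indices i \<in> I_{2l+1} = {-l, -l+1, ..., l} are represented by the reals themselves.
   The quantum group algebra SU_q(2) is a complex *-algebra: carrier type 'a (a ring with 1),
   complex scalar multiplication smul, involution star, Haar state h, and the matrix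
   coefficients t N i j = t^l_{ij} of the irreducible corepresentations. *)

definition Idx :: "nat \<Rightarrow> real set" where
  "Idx N = (\<lambda>k. real k - real N / 2) ` {0..N}"

definition qnum :: "real \<Rightarrow> real \<Rightarrow> real" where
  "qnum q x = (q powr x - q powr (-x)) / (q - inverse q)"

definition SUq2_model ::
  "real \<Rightarrow> (complex \<Rightarrow> 'a::ring_1 \<Rightarrow> 'a) \<Rightarrow> ('a \<Rightarrow> 'a) \<Rightarrow> ('a \<Rightarrow> complex)
   \<Rightarrow> (nat \<Rightarrow> real \<Rightarrow> real \<Rightarrow> 'a) \<Rightarrow> bool" where
  "SUq2_model q smul star h t \<longleftrightarrow>
     0 < q \<and> q < 1 \<and>
     vector_space smul \<and>
     (\<forall>c x y. smul c (x * y) = smul c x * y \<and> smul c (x * y) = x * smul c y) \<and>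
     (\<forall>x y. star (x + y) = star x + star y) \<and>
     (\<forall>c x. star (smul c x) = smul (cnj c) (star x)) \<and>
     (\<forall>x y. star (x * y) = star y * star x) \<and>
     (\<forall>x. star (star x) = x) \<and>
     (\<forall>x y. h (x + y) = h x + h y) \<and>
     (\<forall>c x. h (smul c x) = c * h x) \<and>
     h 1 = 1 \<and>
     t 0 0 0 = 1 \<and>
     (\<forall>N i j N' i' j'. i \<in> Idx N \<longrightarrow> j \<in> Idx N \<longrightarrow> i' \<in> Idx N' \<longrightarrow> j' \<in> Idx N' \<longrightarrow>
        h (t N i j * star (t N' i' j')) =
          (if N = N' \<and> i = i' \<and> j = j'
           then complex_of_real (inverse (qnum q (real N + 1)) * q powr (2 * j)) else 0)) \<and>
     \<not> module.dependent smul {t N i j | N i j. i \<in> Idx N \<and> j \<in> Idx N} \<and>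
     module.span smul {t N i j | N i j. i \<in> Idx N \<and> j \<in> Idx N} = UNIV"

definition fhat :: "('a::ring_1 \<Rightarrow> 'a) \<Rightarrow> ('a \<Rightarrow> complex) \<Rightarrow> (nat \<Rightarrow> real \<Rightarrow> real \<Rightarrow> 'a)
   \<Rightarrow> 'a \<Rightarrow> nat \<Rightarrow> real \<Rightarrow> real \<Rightarrow> complex" where
  "fhat star h t f N m n = h (f * star (t N n m))"

(* A symbol: sigma N i j = \<sigma>_{ij}(l) for l = N/2, i,j \<in> I_{2l+1} (values elsewhere irrelevant). *)

definition homogeneous ::
  "(complex \<Rightarrow> 'a::ring_1 \<Rightarrow> 'a) \<Rightarrow> (nat \<Rightarrow> real \<Rightarrow> real \<Rightarrow> 'a) \<Rightarrow> nat
   \<Rightarrow> (nat \<Rightarrow> real \<Rightarrow> real \<Rightarrow> 'a) \<Rightarrow> bool" where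
  "homogeneous smul t M sigma \<longleftrightarrow>
     (\<forall>N. \<exists>\<psi> :: real \<times> real \<Rightarrow> real \<times> real.
        \<psi> ` (Idx N \<times> Idx N) \<subseteq> Idx N \<times> Idx N \<and>
        (\<forall>i\<in>Idx N. \<forall>j\<in>Idx N.
           sigma N i j \<in> module.span smul {t M (fst (\<psi> (i, j))) (snd (\<psi> (i, j)))} \<and>
           (\<psi> (i, j) \<notin> Idx M \<times> Idx M \<longrightarrow> sigma N i j = 0)))"

definition Phi ::
  "(complex \<Rightarrow> 'a::ring_1 \<Rightarrow> 'a) \<Rightarrow> (nat \<Rightarrow> real \<Rightarrow> real \<Rightarrow> 'a) \<Rightarrow> nat
   \<Rightarrow> (nat \<Rightarrow> real \<Rightarrow> real \<Rightarrow> 'a) \<Rightarrow> bool" where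
  "Phi smul t M sigma \<longleftrightarrow>
     (\<exists>(K::nat) (c :: nat \<Rightarrow> complex) (s :: nat \<Rightarrow> nat \<Rightarrow> real \<Rightarrow> real \<Rightarrow> 'a).
        (\<forall>k<K. homogeneous smul t M (s k)) \<and>
        (\<forall>N. \<forall>i\<in>Idx N. \<forall>j\<in>Idx N. sigma N i j = (\<Sum>k<K. smul (c k) (s k N i j))))"

(* T_sigma f = \<Sum>_l [2l+1]_q Tr_q(\<sigma>(l) \<hat>f(l) T^l),  Tr_q(M) = \<Sum>_i q^{-2i} M_ii.
   The sum over l is taken over the (finite, for f in SU_q(2)) set of l with \<hat>f(l) \<noteq> 0;
   the other terms vanish. *)
definition Tsym ::
  "real \<Rightarrow> (complex \<Rightarrow> 'a::ring_1 \<Rightarrow> 'a) \<Rightarrow> ('a \<Rightarrow> 'a) \<Rightarrow> ('a \<Rightarrow> complex)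
   \<Rightarrow> (nat \<Rightarrow> real \<Rightarrow> real \<Rightarrow> 'a) \<Rightarrow> (nat \<Rightarrow> real \<Rightarrow> real \<Rightarrow> 'a) \<Rightarrow> 'a \<Rightarrow> 'a" where
  "Tsym q smul star h t sigma f =
     (\<Sum>N\<in>{N. \<exists>m\<in>Idx N. \<exists>n\<in>Idx N. fhat star h t f N m n \<noteq> 0}.
        smul (complex_of_real (qnum q (real N + 1)))
          (\<Sum>i\<in>Idx N. smul (complex_of_real (q powr (- 2 * i)))
             (\<Sum>a\<in>Idx N. \<Sum>b\<in>Idx N. sigma N i a * smul (fhat star h t f N a b) (t N b i))))"

definition is_eigenvalue :: "(complex \<Rightarrow> 'a::ring_1 \<Rightarrow> 'a) \<Rightarrow> ('a \<Rightarrow> 'a) \<Rightarrow> complex \<Rightarrow> bool" where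
  "is_eigenvalue smul T \<mu> \<longleftrightarrow> (\<exists>f. f \<noteq> 0 \<and> T f = smul \<mu> f)"

definition eig_mult_ge :: "(complex \<Rightarrow> 'a::ring_1 \<Rightarrow> 'a) \<Rightarrow> ('a \<Rightarrow> 'a) \<Rightarrow> complex \<Rightarrow> nat \<Rightarrow> bool" where
  "eig_mult_ge smul T \<mu> k \<longleftrightarrow>
     (\<exists>S. finite S \<and> card S = k \<and> \<not> module.dependent smul S \<and> (\<forall>f\<in>S. T f = smul \<mu> f))"

end

theory Submission
  imports Defs
begin

lemma qnum_nz:
  assumes "0 < q" "q < 1" "x > 0"
  shows "qnum q x \<noteq> 0"
proof -
  have a: "q powr x < 1" using powr_less_mono2[of x q 1] assms by simp
  have p: "q powr x > 0" using assms by simp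
  have b: "q powr (-x) > 1" using a p by (simp add: powr_minus one_less_inverse)
  have "inverse q > 1" using assms by (simp add: one_less_inverse)
  then have c: "q - inverse q \<noteq> 0" using assms by simp
  show ?thesis unfolding qnum_def using a b c by simp
qed

lemma finite_Idx: "finite (Idx K)" unfolding Idx_def by simp

lemma card_Idx: "card (Idx K) = K + 1"
proof -
  have "inj_on (\<lambda>k. real k - real K / 2) {0..K}" by (auto simp: inj_on_def)
  then show ?thesis unfolding Idx_def by (simp add: card_image)
qed

lemma Idx_mem: "- real K / 2 \<in> Idx K"
  unfolding Idx_def by (rule image_eqI[of _ _ 0]) auto

lemma hsum_gen:
  fixes h :: "'a::ring_1 \<Rightarrow> complex"
  assumes "\<forall>x y. h (x + y) = h x + h y" "h 0 = 0" "finite A"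
  shows "h (\<Sum>x\<in>A. g x) = (\<Sum>x\<in>A. h (g x))"
  using assms(3) by (induction A rule: finite_induct) (simp_all add: assms(1,2))

theorem mainTheorem9:
  fixes q :: real
    and smul :: "complex \<Rightarrow> 'a::ring_1 \<Rightarrow> 'a"
    and star :: "'a \<Rightarrow> 'a"
    and h :: "'a \<Rightarrow> complex"
    and t :: "nat \<Rightarrow> real \<Rightarrow> real \<Rightarrow> 'a"
    and lam :: "nat \<Rightarrow> complex"
    and sigma :: "nat \<Rightarrow> real \<Rightarrow> real \<Rightarrow> 'a"
  assumes "SUq2_model q smul star h t"
    and "Phi smul t 0 sigma"
    and "\<forall>N. \<forall>i0\<in>Idx N. (\<Sum>j\<in>Idx N. sigma N i0 j) = smul (lam N) 1"
  shows "\<forall>N. is_eigenvalue smul (Tsym q smul star h t sigma) (lam N)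
            \<and> eig_mult_ge smul (Tsym q smul star h t sigma) (lam N) (N + 1)"
proof
  fix N
  note M = assms(1)[unfolded SUq2_model_def]
  have q0: "0<q" using M by (elim conjE) assumption
  have q1: "q<1" using M by (elim conjE) assumption
  have VS: "vector_space smul" using M by (elim conjE) assumption
  have sm1: "\<forall>c x y. smul c (x * y) = smul c x * y \<and> smul c (x * y) = x * smul c y"
    using M by (elim conjE) assumption
  have hadd: "\<forall>x y. h (x + y) = h x + h y" using M by (elim conjE) assumption
  have hsm: "\<forall>c x. h (smul c x) = c * h x" using M by (elim conjE) assumption
  have orth: "\<forall>N i j N' i' j'. i \<in> Idx N \<longrightarrow> j \<in> Idx N \<longrightarrow> i' \<in> Idx N' \<longrightarrow> j' \<in> Idx N' \<longrightarrow>
        h (t N i j * star (t N' i' j')) =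
          (if N = N' \<and> i = i' \<and> j = j'
           then complex_of_real (inverse (qnum q (real N + 1)) * q powr (2 * j)) else 0)"
    using M by (elim conjE) assumption
  interpret V: vector_space smul by (rule VS)
  have smL: "smul c x * y = smul c (x * y)" for c x y by (rule sym, rule conjunct1[OF sm1[rule_format]])
  have h0: "h 0 = 0" using hadd by (metis add_cancel_right_right add_0)
  have hsum: "h (\<Sum>x\<in>A. g x) = (\<Sum>x\<in>A. h (g x))" if "finite A" for A and g :: "real \<Rightarrow> 'a"
    using that by (induction A rule: finite_induct) (auto simp: h0 hadd)
  define qn where "qn = qnum q (real N + 1)"
  have qn0: "qn \<noteq> 0" unfolding qn_def by (rule qnum_nz[OF q0 q1]) simp
  define w where "w v = complex_of_real (q powr (-2*v))" for v
  define F where "F u = (\<Sum>v\<in>Idx N. smul (w v) (t N u v))" for u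
  have G: "h (F u * star (t N' b a)) = (if N' = N \<and> b = u then complex_of_real (inverse qn) else 0)"
    if a: "a \<in> Idx N'" and b: "b \<in> Idx N'" and u: "u \<in> Idx N" for N' a b u
  proof -
    have "F u * star (t N' b a) = (\<Sum>v\<in>Idx N. smul (w v) (t N u v * star (t N' b a)))"
      unfolding F_def by (simp add: sum_distrib_right smL)
    then have "h (F u * star (t N' b a)) = (\<Sum>v\<in>Idx N. w v * h (t N u v * star (t N' b a)))"
      by (simp add: hsum finite_Idx hsm)
    also have "\<dots> = (\<Sum>v\<in>Idx N. w v * (if N = N' \<and> u = b \<and> v = a
           then complex_of_real (inverse qn * q powr (2 * v)) else 0))"
      using orth a b u by (intro sum.cong refl) (simp add: qn_def)
    also have "\<dots> = (if N' = N \<and> b = u then complex_of_real (inverse qn) else 0)"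
    proof (cases "N' = N \<and> b = u")
      case True
      then have "(\<Sum>v\<in>Idx N. w v * (if N = N' \<and> u = b \<and> v = a
           then complex_of_real (inverse qn * q powr (2 * v)) else 0))
          = w a * complex_of_real (inverse qn * q powr (2 * a))"
        using a by (simp add: finite_Idx if_distrib cong: if_cong)
      also have "\<dots> = complex_of_real (inverse qn)"
      proof -
        have "q powr (-2*a) * q powr (2*a) = 1" using q0 by (simp add: powr_add[symmetric])
        then have "q powr (-2*a) * (inverse qn * q powr (2*a)) = inverse qn"
          by (metis mult.left_commute mult.right_neutral)
        then show ?thesis unfolding w_def by (metis of_real_mult)
      qed
      finally show ?thesis using True by simp
    next
      case False
      then show ?thesis by auto
    qed
    finally show ?thesis .
  qed
  have F0: "F u \<noteq> 0" if "u \<in> Idx N" for u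
  proof
    assume "F u = 0"
    then have "h (F u * star (t N u u)) = 0" by (simp add: h0)
    with G[OF that that that] qn0 show False by simp
  qed
  have TF: "Tsym q smul star h t sigma (F u) = smul (lam N) (F u)" if u: "u \<in> Idx N" for u
  proof -
    have S: "{N'. \<exists>m\<in>Idx N'. \<exists>n\<in>Idx N'. fhat star h t (F u) N' m n \<noteq> 0} = {N}"
      using G u qn0 unfolding fhat_def by auto
    have inner: "(\<Sum>a\<in>Idx N. \<Sum>b\<in>Idx N. sigma N i a * smul (fhat star h t (F u) N a b) (t N b i))
        = smul (lam N * complex_of_real (inverse qn)) (t N u i)" if i: "i \<in> Idx N" for i
    proof -
      have "(\<Sum>a\<in>Idx N. \<Sum>b\<in>Idx N. sigma N i a * smul (fhat star h t (F u) N a b) (t N b i))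
          = (\<Sum>a\<in>Idx N. sigma N i a * smul (complex_of_real (inverse qn)) (t N u i))"
      proof (intro sum.cong refl)
        fix a assume a: "a \<in> Idx N"
        have "(\<Sum>b\<in>Idx N. sigma N i a * smul (fhat star h t (F u) N a b) (t N b i))
           = (\<Sum>b\<in>Idx N. if b = u then sigma N i a * smul (complex_of_real (inverse qn)) (t N u i) else 0)"
          using G[OF a _ u] unfolding fhat_def by (intro sum.cong refl) auto
        also have "\<dots> = sigma N i a * smul (complex_of_real (inverse qn)) (t N u i)"
          using u by (simp add: finite_Idx)
        finally show "(\<Sum>b\<in>Idx N. sigma N i a * smul (fhat star h t (F u) N a b) (t N b i))
           = sigma N i a * smul (complex_of_real (inverse qn)) (t N u i)" .
      qed
      also have "\<dots> = (\<Sum>a\<in>Idx N. sigma N i a) * smul (complex_of_real (inverse qn)) (t N u i)"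
        by (simp add: sum_distrib_right)
      also have "\<dots> = smul (lam N) 1 * smul (complex_of_real (inverse qn)) (t N u i)"
        using assms(3) i by simp
      also have "\<dots> = smul (lam N) (smul (complex_of_real (inverse qn)) (t N u i))"
        by (metis sm1 mult_1)
      also have "\<dots> = smul (lam N * complex_of_real (inverse qn)) (t N u i)"
        by simp
      finally show ?thesis .
    qed
    have "Tsym q smul star h t sigma (F u) = smul (complex_of_real qn)
          (\<Sum>i\<in>Idx N. smul (complex_of_real (q powr (- 2 * i)))
             (smul (lam N * complex_of_real (inverse qn)) (t N u i)))"
      unfolding Tsym_def S
      apply (simp only: sum.insert sum.empty finite.emptyI empty_iff not_False_eq_True add_0_right)
      apply (subst qn_def)
      apply (rule arg_cong[where f="smul _"])
      apply (rule sum.cong[OF refl])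
      apply (rule arg_cong[where f="smul _"])
      by (rule inner)
    also have "\<dots> = smul (complex_of_real qn) (smul (lam N * complex_of_real (inverse qn)) (F u))"
      unfolding F_def w_def by (simp add: V.scale_sum_right mult.commute)
    also have "\<dots> = smul (lam N) (F u)"
      using qn0 by (simp add: field_simps)
    finally show ?thesis .
  qed
  have Finj: "inj_on F (Idx N)"
  proof (rule inj_onI)
    fix u u' assume u: "u \<in> Idx N" and u': "u' \<in> Idx N" and eq: "F u = F u'"
    have "h (F u * star (t N u u)) \<noteq> 0" using G[OF u u u] qn0 by simp
    then have "h (F u' * star (t N u u)) \<noteq> 0" using eq by simp
    then show "u = u'" using G[OF u u u'] by (auto split: if_splits)
  qed
  have indep: "\<not> V.dependent (F ` Idx N)"
  proof
    assume "V.dependent (F ` Idx N)"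
    then obtain T c where all: "finite T \<and> T \<subseteq> F ` Idx N \<and> (\<Sum>v\<in>T. smul (c v) v) = 0 \<and> (\<exists>v\<in>T. c v \<noteq> 0)"
      unfolding V.dependent_explicit by (elim exE) (erule that)
    have T: "finite T" "T \<subseteq> F ` Idx N" using all by simp_all
    have s: "(\<Sum>v\<in>T. smul (c v) v) = 0" and nz: "\<exists>v\<in>T. c v \<noteq> 0" using all by simp_all
    from nz obtain v where v: "v \<in> T" "c v \<noteq> 0" by blast
    then obtain u0 where u0: "u0 \<in> Idx N" "v = F u0" using T by blast
    let ?s = "star (t N u0 u0)"
    have "0 = h ((\<Sum>x\<in>T. smul (c x) x) * ?s)" using s h0 by simp
    also have "\<dots> = (\<Sum>x\<in>T. c x * h (x * ?s))"
      using T(1) by (simp add: sum_distrib_right smL hsum_gen[OF hadd h0] hsm)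
    also have "\<dots> = (\<Sum>x\<in>T. if x = v then c v * complex_of_real (inverse qn) else 0)"
    proof (intro sum.cong refl)
      fix x assume x: "x \<in> T"
      then obtain u where u: "u \<in> Idx N" "x = F u" using T by blast
      show "c x * h (x * ?s) = (if x = v then c v * complex_of_real (inverse qn) else 0)"
      proof -
        have e: "(x = v) = (u = u0)" using u u0 Finj by (auto dest: inj_onD)
        show ?thesis using G[OF u0(1) u0(1) u(1)] u(2) u0(2) e by auto
      qed
    qed
    also have "\<dots> = c v * complex_of_real (inverse qn)" using v T(1) by simp
    finally show False using v qn0 by simp
  qed
  show "is_eigenvalue smul (Tsym q smul star h t sigma) (lam N)
            \<and> eig_mult_ge smul (Tsym q smul star h t sigma) (lam N) (N + 1)"
  proof
    show "is_eigenvalue smul (Tsym q smul star h t sigma) (lam N)"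
      unfolding is_eigenvalue_def using F0[OF Idx_mem] TF[OF Idx_mem] by blast
    show "eig_mult_ge smul (Tsym q smul star h t sigma) (lam N) (N + 1)"
      unfolding eig_mult_ge_def
      by (rule exI[of _ "F ` Idx N"])
         (use finite_Idx card_Idx Finj indep TF in \<open>auto simp: card_image\<close>)
  qed
qed

end
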